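(* Let $G=(V,E)$ be a finite Eulerian graph (every vertex has even degree). For $\underline{r}=(r_v)_{v\in V}\in\mathbb{Z}^V$ let $\varepsilon_{\underline{r}}(G)$ be the number of orientations of $G$ in which every vertex $v$ has in-degree exactly $r_v$. Then $\varepsilon_{\underline{r}}(G)$ is maximal (over all $\underline{r}\in\mathbb{Z}^V$) when $r_v=d_G(v)/2$ for every vertex $v$; that is, $\varepsilon_{\underline{r}}(G)\leq \varepsilon(G)$ for every $\underline{r}\in\mathbb{Z}^V$, where $\varepsilon(G)$ is the number of Eulerian orientations of $G$.
   Context: An Eulerian orientation is an orientation in which every vertex has in-degree equal to out-degree, i.e. in-degree $d_G(v)/2$ at each vertex $v$. *)

theory Defs
  imports "HOL-Library.FuncSet"
begin

definition simple_graph :: "'a set \<Rightarrow> 'a set set \<Rightarrow> bool" where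
  "simple_graph V E \<longleftrightarrow> finite V \<and> (\<forall>e\<in>E. e \<subseteq> V \<and> card e = 2)"

definition degree :: "'a set set \<Rightarrow> 'a \<Rightarrow> nat" where
  "degree E v = card {e\<in>E. v \<in> e}"

text \<open>An orientation assigns to each edge its head (an endpoint of that edge).\<close>
definition orientations :: "'a set set \<Rightarrow> ('a set \<Rightarrow> 'a) set" where
  "orientations E = (\<Pi>\<^sub>E e\<in>E. e)"

definition indeg :: "'a set set \<Rightarrow> ('a set \<Rightarrow> 'a) \<Rightarrow> 'a \<Rightarrow> nat" where
  "indeg E \<sigma> v = card {e\<in>E. \<sigma> e = v}"

definition eps_r :: "'a set \<Rightarrow> 'a set set \<Rightarrow> ('a \<Rightarrow> int) \<Rightarrow> nat" where
  "eps_r V E r = card {\<sigma> \<in> orientations E. \<forall>v\<in>V. int (indeg E \<sigma> v) = r v}"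

definition eps :: "'a set \<Rightarrow> 'a set set \<Rightarrow> nat" where
  "eps V E = card {\<sigma> \<in> orientations E. \<forall>v\<in>V. 2 * indeg E \<sigma> v = degree E v}"

end

theory Submission
  imports Defs
begin

definition other :: "'a set \<Rightarrow> 'a \<Rightarrow> 'a" where
  "other e x = (THE y. y \<in> e \<and> y \<noteq> x)"

lemma other_prop:
  assumes "card e = 2" "x \<in> e"
  shows "other e x \<in> e" "other e x \<noteq> x" "\<And>y. y \<in> e \<Longrightarrow> y \<noteq> x \<Longrightarrow> y = other e x"
proof -
  obtain a b where ab: "e = {a, b}" "a \<noteq> b" using assms(1) by (meson card_2_iff)
  have ex: "\<exists>!y. y \<in> e \<and> y \<noteq> x" using ab assms(2) by auto
  from theI'[OF ex] show "other e x \<in> e" "other e x \<noteq> x" unfolding other_def by auto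
  show "\<And>y. y \<in> e \<Longrightarrow> y \<noteq> x \<Longrightarrow> y = other e x"
    using the1_equality[OF ex] unfolding other_def by auto
qed

definition revo :: "'a set set \<Rightarrow> ('a set \<Rightarrow> 'a) \<Rightarrow> 'a set \<Rightarrow> 'a" where
  "revo H \<eta> = (\<lambda>e. if e \<in> H then other e (\<eta> e) else undefined)"

definition merge :: "'a set set \<Rightarrow> ('a set \<Rightarrow> 'a) \<Rightarrow> ('a set \<Rightarrow> 'a) \<Rightarrow> 'a set \<Rightarrow> 'a" where
  "merge H \<omega> \<eta> = (\<lambda>e. if e \<in> H then \<eta> e else \<omega> e)"

lemma revo_orient:
  assumes "\<forall>e\<in>H. card e = 2" "\<eta> \<in> orientations H"
  shows "revo H \<eta> \<in> orientations H"
proof -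
  have "\<forall>e\<in>H. other e (\<eta> e) \<in> e"
  proof
    fix e assume "e \<in> H"
    then have "card e = 2" "\<eta> e \<in> e" using assms unfolding orientations_def by auto
    then show "other e (\<eta> e) \<in> e" by (rule other_prop(1))
  qed
  then show ?thesis unfolding orientations_def revo_def by (auto simp: PiE_iff extensional_def)
qed

lemma revo_revo:
  assumes "\<forall>e\<in>H. card e = 2" "\<eta> \<in> orientations H"
  shows "revo H (revo H \<eta>) = \<eta>"
proof
  fix e show "revo H (revo H \<eta>) e = \<eta> e"
  proof (cases "e \<in> H")
    case True
    then have c: "card e = 2" "\<eta> e \<in> e" using assms unfolding orientations_def by auto
    then show ?thesis using True other_prop[OF c] other_prop[OF c(1) other_prop(1)[OF c]]
      unfolding revo_def by metis
  next
    case False then show ?thesis using assms unfolding revo_def orientations_def by auto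
  qed
qed

lemma indeg_revo:
  assumes "finite H" "\<forall>e\<in>H. card e = 2" "\<eta> \<in> orientations H"
  shows "indeg H (revo H \<eta>) v + indeg H \<eta> v = degree H v"
proof -
  have "{e\<in>H. v \<in> e} = {e\<in>H. revo H \<eta> e = v} \<union> {e\<in>H. \<eta> e = v}"
  proof (intro equalityI subsetI)
    fix e assume e: "e \<in> {e\<in>H. v \<in> e}"
    then have c: "card e = 2" "\<eta> e \<in> e" using assms unfolding orientations_def by auto
    show "e \<in> {e\<in>H. revo H \<eta> e = v} \<union> {e\<in>H. \<eta> e = v}"
    proof (cases "\<eta> e = v")
      case False
      then have "v = other e (\<eta> e)" using e other_prop(3)[OF c] by auto
      then show ?thesis using e unfolding revo_def by auto
    qed (use e in auto)
  next
    fix e assume e: "e \<in> {e\<in>H. revo H \<eta> e = v} \<union> {e\<in>H. \<eta> e = v}"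
    then have c: "card e = 2" "\<eta> e \<in> e" "e \<in> H" using assms unfolding orientations_def by auto
    have "revo H \<eta> e \<in> e" using other_prop(1)[OF c(1,2)] c(3) unfolding revo_def by simp
    then show "e \<in> {e\<in>H. v \<in> e}" using e c by auto
  qed
  moreover have "{e\<in>H. revo H \<eta> e = v} \<inter> {e\<in>H. \<eta> e = v} = {}"
  proof -
    { fix e assume e: "e \<in> H" "revo H \<eta> e = v" "\<eta> e = v"
      have c: "card e = 2" "\<eta> e \<in> e" using assms e(1) unfolding orientations_def by auto
      have "other e (\<eta> e) = v" using e unfolding revo_def by simp
      then have False using e(3) other_prop(2)[OF c] by simp }
    then show ?thesis by auto
  qed
  ultimately show ?thesis unfolding indeg_def degree_def
    by (simp add: card_Un_disjoint assms(1))
qed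

lemma indeg_merge:
  assumes "finite E" "H \<subseteq> E"
  shows "indeg E (merge H \<omega> \<eta>) v = indeg (E - H) \<omega> v + indeg H \<eta> v"
proof -
  have "{e\<in>E. merge H \<omega> \<eta> e = v} = {e\<in>E - H. \<omega> e = v} \<union> {e\<in>H. \<eta> e = v}"
    using assms(2) unfolding merge_def by auto
  moreover have "finite H" using assms finite_subset by auto
  ultimately show ?thesis unfolding indeg_def using assms
    by (simp add: card_Un_disjoint disjoint_iff)
qed

lemma simple_finite: "simple_graph V E \<Longrightarrow> finite E"
proof -
  assume a: "simple_graph V E"
  then have "E \<subseteq> Pow V" "finite V" unfolding simple_graph_def by auto
  then show "finite E" using finite_subset by blast
qed

lemma merge_orient:
  assumes "H \<subseteq> E" "\<omega> \<in> orientations (E - H)" "\<eta> \<in> orientations H"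
  shows "merge H \<omega> \<eta> \<in> orientations E"
  using assms unfolding orientations_def merge_def by (auto simp: PiE_iff extensional_def)

definition Aset :: "'a set \<Rightarrow> 'a set set \<Rightarrow> ('a \<Rightarrow> int) \<Rightarrow> ('a set \<Rightarrow> 'a) set" where
  "Aset V E b = {\<sigma> \<in> orientations E. \<forall>v\<in>V. 2 * int (indeg E \<sigma> v) = int (degree E v) + 2 * b v}"

definition Om :: "'a set \<Rightarrow> 'a set set \<Rightarrow> 'a set set \<Rightarrow> ('a set \<Rightarrow> 'a) set" where
  "Om V E H = {\<omega> \<in> orientations (E - H). \<forall>v\<in>V. 2 * indeg (E - H) \<omega> v + degree H v = degree E v}"

definition Pset :: "'a set \<Rightarrow> 'a set set \<Rightarrow> ('a \<Rightarrow> int) \<Rightarrow> 'a set set \<Rightarrow> (('a set \<Rightarrow> 'a) \<times> ('a set \<Rightarrow> 'a)) set" where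
  "Pset V E b H = {p \<in> Aset V E b \<times> Aset V E (\<lambda>v. - b v). {e\<in>E. fst p e \<noteq> snd p e} = H}"

lemma card_P:
  assumes sg: "simple_graph V E" and HE: "H \<subseteq> E"
  shows "card (Pset V E b H) = card (Om V E H) * card (Aset V H b)"
proof -
  have fE: "finite E" using simple_finite[OF sg] .
  have fH: "finite H" using fE HE finite_subset by auto
  have c2E: "\<forall>e\<in>E. card e = 2" using sg unfolding simple_graph_def by auto
  have c2: "\<forall>e\<in>H. card e = 2" using c2E HE by auto
  define g where "g = (\<lambda>(\<omega>, \<eta>). (merge H \<omega> \<eta>, merge H \<omega> (revo H \<eta>)))"
  have inj: "inj_on g (Om V E H \<times> Aset V H b)"
  proof (rule inj_onI)
    fix p q assume p: "p \<in> Om V E H \<times> Aset V H b" and q: "q \<in> Om V E H \<times> Aset V H b" and gq: "g p = g q"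
    obtain \<omega> \<eta> where pe: "p = (\<omega>, \<eta>)" by force
    obtain \<omega>' \<eta>' where qe: "q = (\<omega>', \<eta>')" by force
    have o: "\<omega> \<in> orientations (E - H)" "\<omega>' \<in> orientations (E - H)" "\<eta> \<in> orientations H" "\<eta>' \<in> orientations H"
      using p q pe qe unfolding Om_def Aset_def by auto
    have m: "merge H \<omega> \<eta> = merge H \<omega>' \<eta>'" using gq pe qe unfolding g_def by auto
    have "\<omega> = \<omega>'"
    proof
      fix e show "\<omega> e = \<omega>' e"
      proof (cases "e \<in> H")
        case True then show ?thesis using o unfolding orientations_def by (auto simp: PiE_iff extensional_def)
      next
        case False then show ?thesis using fun_cong[OF m, of e] unfolding merge_def by auto
      qed
    qed
    moreover have "\<eta> = \<eta>'"
    proof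
      fix e show "\<eta> e = \<eta>' e"
      proof (cases "e \<in> H")
        case False then show ?thesis using o unfolding orientations_def by (auto simp: PiE_iff extensional_def)
      next
        case True then show ?thesis using fun_cong[OF m, of e] unfolding merge_def by auto
      qed
    qed
    ultimately show "p = q" using pe qe by simp
  qed
  have img: "g ` (Om V E H \<times> Aset V H b) = Pset V E b H"
  proof (intro equalityI subsetI)
    fix p assume "p \<in> g ` (Om V E H \<times> Aset V H b)"
    then obtain \<omega> \<eta> where om: "\<omega> \<in> Om V E H" and et: "\<eta> \<in> Aset V H b" and pe: "p = g (\<omega>, \<eta>)" by auto
    have o: "\<omega> \<in> orientations (E - H)" "\<eta> \<in> orientations H" using om et unfolding Om_def Aset_def by auto
    have ro: "revo H \<eta> \<in> orientations H" using revo_orient[OF c2 o(2)] .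
    have s1: "merge H \<omega> \<eta> \<in> Aset V E b"
    proof -
      { fix v assume v: "v \<in> V"
        have "int (indeg E (merge H \<omega> \<eta>) v) = int (indeg (E - H) \<omega> v) + int (indeg H \<eta> v)"
          using indeg_merge[OF fE HE] by simp
        moreover have "2 * indeg (E - H) \<omega> v + degree H v = degree E v" using om v unfolding Om_def by auto
        moreover have "2 * int (indeg H \<eta> v) = int (degree H v) + 2 * b v" using et v unfolding Aset_def by auto
        ultimately have "2 * int (indeg E (merge H \<omega> \<eta>) v) = int (degree E v) + 2 * b v" by linarith }
      then show ?thesis unfolding Aset_def using merge_orient[OF HE o] by auto
    qed
    have s2: "merge H \<omega> (revo H \<eta>) \<in> Aset V E (\<lambda>v. - b v)"
    proof -
      { fix v assume v: "v \<in> V"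
        have "int (indeg E (merge H \<omega> (revo H \<eta>)) v) = int (indeg (E - H) \<omega> v) + int (indeg H (revo H \<eta>) v)"
          using indeg_merge[OF fE HE] by simp
        moreover have "int (indeg H (revo H \<eta>) v) + int (indeg H \<eta> v) = int (degree H v)"
          using indeg_revo[OF fH c2 o(2)] by (metis of_nat_add)
        moreover have "2 * indeg (E - H) \<omega> v + degree H v = degree E v" using om v unfolding Om_def by auto
        moreover have "2 * int (indeg H \<eta> v) = int (degree H v) + 2 * b v" using et v unfolding Aset_def by auto
        ultimately have "2 * int (indeg E (merge H \<omega> (revo H \<eta>)) v) = int (degree E v) + 2 * - b v" by linarith }
      then show ?thesis unfolding Aset_def using merge_orient[OF HE o(1) ro] by auto
    qed
    have s3: "{e\<in>E. merge H \<omega> \<eta> e \<noteq> merge H \<omega> (revo H \<eta>) e} = H"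
    proof (intro equalityI subsetI)
      fix e assume "e \<in> {e\<in>E. merge H \<omega> \<eta> e \<noteq> merge H \<omega> (revo H \<eta>) e}"
      then show "e \<in> H" unfolding merge_def by (auto split: if_splits)
    next
      fix e assume eH: "e \<in> H"
      then have c: "card e = 2" "\<eta> e \<in> e" using c2 o(2) unfolding orientations_def by auto
      have "other e (\<eta> e) \<noteq> \<eta> e" using other_prop(2)[OF c] .
      then show "e \<in> {e\<in>E. merge H \<omega> \<eta> e \<noteq> merge H \<omega> (revo H \<eta>) e}"
        using eH HE unfolding merge_def revo_def by auto
    qed
    show "p \<in> Pset V E b H" using s1 s2 s3 pe unfolding Pset_def g_def by auto
  next
    fix p assume p: "p \<in> Pset V E b H"
    obtain \<sigma> \<rho> where pe: "p = (\<sigma>, \<rho>)" by force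
    have sA: "\<sigma> \<in> Aset V E b" and rA: "\<rho> \<in> Aset V E (\<lambda>v. - b v)" and dis: "{e\<in>E. \<sigma> e \<noteq> \<rho> e} = H"
      using p pe unfolding Pset_def by auto
    have so: "\<sigma> \<in> orientations E" and ro: "\<rho> \<in> orientations E" using sA rA unfolding Aset_def by auto
    define \<omega> where "\<omega> = restrict \<sigma> (E - H)"
    define \<eta> where "\<eta> = restrict \<sigma> H"
    have oo: "\<omega> \<in> orientations (E - H)" "\<eta> \<in> orientations H"
      using so HE unfolding \<omega>_def \<eta>_def orientations_def by auto
    have sm: "\<sigma> = merge H \<omega> \<eta>"
    proof
      fix e show "\<sigma> e = merge H \<omega> \<eta> e"
        using so HE unfolding merge_def \<omega>_def \<eta>_def orientations_def by (auto simp: PiE_iff extensional_def)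
    qed
    have rm: "\<rho> = merge H \<omega> (revo H \<eta>)"
    proof
      fix e show "\<rho> e = merge H \<omega> (revo H \<eta>) e"
      proof (cases "e \<in> E")
        case False then show ?thesis using so ro HE unfolding merge_def \<omega>_def orientations_def
            by (auto simp: PiE_iff extensional_def)
      next
        case eE: True
        show ?thesis
        proof (cases "e \<in> H")
          case True
          have c: "card e = 2" "\<sigma> e \<in> e" using c2E so eE unfolding orientations_def by auto
          have "\<rho> e \<in> e" "\<rho> e \<noteq> \<sigma> e" using ro eE dis True unfolding orientations_def by auto
          then have "\<rho> e = other e (\<sigma> e)" using other_prop(3)[OF c] by auto
          then show ?thesis using True unfolding merge_def revo_def \<eta>_def by auto
        next
          case False
          then have "\<rho> e = \<sigma> e" using dis eE by auto
          then show ?thesis using False eE unfolding merge_def \<omega>_def by auto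
        qed
      qed
    qed
    have omO: "\<omega> \<in> Om V E H" and etA: "\<eta> \<in> Aset V H b"
    proof -
      have ro2: "revo H \<eta> \<in> orientations H" using revo_orient[OF c2 oo(2)] .
      { fix v assume v: "v \<in> V"
        have a1: "int (indeg E \<sigma> v) = int (indeg (E - H) \<omega> v) + int (indeg H \<eta> v)"
          using indeg_merge[OF fE HE] sm by (metis of_nat_add)
        have a2: "int (indeg E \<rho> v) = int (indeg (E - H) \<omega> v) + int (indeg H (revo H \<eta>) v)"
          using indeg_merge[OF fE HE] rm by (metis of_nat_add)
        have a3: "int (indeg H (revo H \<eta>) v) + int (indeg H \<eta> v) = int (degree H v)"
          using indeg_revo[OF fH c2 oo(2)] by (metis of_nat_add)
        have a4: "2 * int (indeg E \<sigma> v) = int (degree E v) + 2 * b v" using sA v unfolding Aset_def by auto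
        have a5: "2 * int (indeg E \<rho> v) = int (degree E v) + 2 * - b v" using rA v unfolding Aset_def by auto
        have "int (2 * indeg (E - H) \<omega> v + degree H v) = int (degree E v)" using a1 a2 a3 a4 a5 by simp
        then have "2 * indeg (E - H) \<omega> v + degree H v = degree E v" by (metis of_nat_eq_iff)
        moreover have "2 * int (indeg H \<eta> v) = int (degree H v) + 2 * b v" using a1 a2 a3 a4 a5 by simp
        ultimately have "2 * indeg (E - H) \<omega> v + degree H v = degree E v \<and> 2 * int (indeg H \<eta> v) = int (degree H v) + 2 * b v" by simp }
      then show "\<omega> \<in> Om V E H" "\<eta> \<in> Aset V H b" unfolding Om_def Aset_def using oo by auto
    qed
    show "p \<in> g ` (Om V E H \<times> Aset V H b)"
      using omO etA sm rm pe unfolding g_def by (auto intro!: image_eqI[where x="(\<omega>, \<eta>)"])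
  qed
  have "card (Pset V E b H) = card (Om V E H \<times> Aset V H b)"
    using card_image[OF inj] img by simp
  then show ?thesis by (simp add: card_cartesian_product)
qed

lemma finite_orient:
  assumes "simple_graph V E" shows "finite (orientations E)"
proof -
  have "finite E" using simple_finite[OF assms] .
  moreover have "\<forall>e\<in>E. finite e" using assms unfolding simple_graph_def by (auto intro: card_ge_0_finite)
  ultimately show ?thesis unfolding orientations_def by (simp add: finite_PiE)
qed

lemma card_pairs:
  assumes sg: "simple_graph V E"
  shows "card (Aset V E b) * card (Aset V E (\<lambda>v. - b v)) = (\<Sum>H\<in>Pow E. card (Pset V E b H))"
proof -
  have fO: "finite (orientations E)" using finite_orient[OF sg] .
  have eq: "Aset V E b \<times> Aset V E (\<lambda>v. - b v) = (\<Union>H\<in>Pow E. Pset V E b H)"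
    unfolding Pset_def by auto
  have fA: "finite (Aset V E c)" for c using fO unfolding Aset_def by auto
  have "card (\<Union>H\<in>Pow E. Pset V E b H) = (\<Sum>H\<in>Pow E. card (Pset V E b H))"
  proof (rule card_UN_disjoint)
    show "finite (Pow E)" using simple_finite[OF sg] by simp
    show "\<forall>i\<in>Pow E. finite (Pset V E b i)"
      using fA unfolding Pset_def by (auto intro: finite_subset[of _ "Aset V E b \<times> Aset V E (\<lambda>v. - b v)"])
    show "\<forall>i\<in>Pow E. \<forall>j\<in>Pow E. i \<noteq> j \<longrightarrow> Pset V E b i \<inter> Pset V E b j = {}"
      unfolding Pset_def by auto
  qed
  then show ?thesis using eq by (metis card_cartesian_product)
qed

lemma card_sym:
  assumes sg: "simple_graph V E"
  shows "card (Aset V E (\<lambda>v. - b v)) = card (Aset V E b)"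
proof -
  have fE: "finite E" using simple_finite[OF sg] .
  have c2E: "\<forall>e\<in>E. card e = 2" using sg unfolding simple_graph_def by auto
  have inj: "inj_on (revo E) (Aset V E b)"
  proof (rule inj_onI)
    fix x y assume "x \<in> Aset V E b" "y \<in> Aset V E b" and xy: "revo E x = revo E y"
    then have "x \<in> orientations E" "y \<in> orientations E" unfolding Aset_def by auto
    then show "x = y" using xy revo_revo[OF c2E] by metis
  qed
  have "revo E ` Aset V E b = Aset V E (\<lambda>v. - b v)"
  proof (intro equalityI subsetI)
    fix x assume "x \<in> revo E ` Aset V E b"
    then obtain \<sigma> where s: "\<sigma> \<in> Aset V E b" "x = revo E \<sigma>" by auto
    have so: "\<sigma> \<in> orientations E" using s unfolding Aset_def by auto
    { fix v assume v: "v \<in> V"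
      have "int (indeg E (revo E \<sigma>) v) + int (indeg E \<sigma> v) = int (degree E v)"
        using indeg_revo[OF fE c2E so] by (metis of_nat_add)
      moreover have "2 * int (indeg E \<sigma> v) = int (degree E v) + 2 * b v" using s v unfolding Aset_def by auto
      ultimately have "2 * int (indeg E (revo E \<sigma>) v) = int (degree E v) + 2 * - b v" by linarith }
    then show "x \<in> Aset V E (\<lambda>v. - b v)" using s revo_orient[OF c2E so] unfolding Aset_def by auto
  next
    fix x assume xA: "x \<in> Aset V E (\<lambda>v. - b v)"
    have xo: "x \<in> orientations E" using xA unfolding Aset_def by auto
    { fix v assume v: "v \<in> V"
      have "int (indeg E (revo E x) v) + int (indeg E x v) = int (degree E v)"
        using indeg_revo[OF fE c2E xo] by (metis of_nat_add)
      moreover have "2 * int (indeg E x v) = int (degree E v) + 2 * - b v" using xA v unfolding Aset_def by auto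
      ultimately have "2 * int (indeg E (revo E x) v) = int (degree E v) + 2 * b v" by linarith }
    then have "revo E x \<in> Aset V E b" using revo_orient[OF c2E xo] unfolding Aset_def by auto
    then show "x \<in> revo E ` Aset V E b" using revo_revo[OF c2E xo] by (metis image_eqI)
  qed
  then show ?thesis using card_image[OF inj] by simp
qed

lemma card_filter_sum: "finite A \<Longrightarrow> card {x\<in>A. P x} = (\<Sum>x\<in>A. if P x then 1 else (0::nat))"
  using sum.inter_filter[of A "\<lambda>_. 1::nat" P] by simp

lemma exists_euler:
  "simple_graph V E \<Longrightarrow> \<forall>v\<in>V. even (degree E v) \<Longrightarrow> \<exists>\<sigma>\<in>orientations E. \<forall>v\<in>V. 2 * indeg E \<sigma> v = degree E v"
proof (induction "card E" arbitrary: E rule: less_induct)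
  case less
  have fE: "finite E" using simple_finite[OF less.prems(1)] .
  have c2E: "\<forall>e\<in>E. card e = 2" and subV: "\<forall>e\<in>E. e \<subseteq> V" and fV: "finite V"
    using less.prems(1) unfolding simple_graph_def by auto
  have isum: "indeg F \<sigma> x = (\<Sum>g\<in>F. if \<sigma> g = x then 1 else 0)" if "finite F" for F :: "'a set set" and \<sigma> x
    unfolding indeg_def using card_filter_sum[OF that] .
  have dsum: "degree F x = (\<Sum>g\<in>F. if x \<in> g then 1 else 0)" if "finite F" for F :: "'a set set" and x
    unfolding degree_def using card_filter_sum[OF that] .
  show ?case
  proof (cases "E = {}")
    case True
    then show ?thesis unfolding orientations_def indeg_def degree_def by auto
  next
    case False
    then obtain e where eE: "e \<in> E" by auto
    obtain v u where vu: "e = {v, u}" "v \<noteq> u" using c2E eE by (meson card_2_iff)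
    have vV: "v \<in> V" using subV eE vu by auto
    have uV: "u \<in> V" using subV eE vu by auto
    have "e \<in> {g\<in>E. v \<in> g}" using eE vu by auto
    then have "degree E v \<noteq> 0" unfolding degree_def using fE card_0_eq[of "{g\<in>E. v \<in> g}"] by auto
    moreover have "even (degree E v)" using less.prems(2) vV by auto
    ultimately have d2: "degree E v \<ge> 2" by presburger
    have "\<exists>e'\<in>E. v \<in> e' \<and> e' \<noteq> e"
    proof (rule ccontr)
      assume "\<not> ?thesis"
      then have "{g\<in>E. v \<in> g} \<subseteq> {e}" by auto
      then have "card {g\<in>E. v \<in> g} \<le> card {e}" by (intro card_mono) auto
      then have "card {g\<in>E. v \<in> g} \<le> 1" by simp
      then show False using d2 unfolding degree_def by simp
    qed
    then obtain e' where e'E: "e' \<in> E" "v \<in> e'" "e' \<noteq> e" by auto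
    define w where "w = other e' v"
    have ce': "card e' = 2" using c2E e'E(1) by auto
    have wp: "w \<in> e'" "w \<noteq> v" unfolding w_def using other_prop(1,2)[OF ce' e'E(2)] by auto
    have e'eq: "e' = {v, w}"
    proof -
      obtain a b where "e' = {a, b}" "a \<noteq> b" using c2E e'E(1) by (meson card_2_iff)
      then show ?thesis using wp e'E(2) by auto
    qed
    have wu: "w \<noteq> u" using e'eq vu e'E(3) by auto
    have wV: "w \<in> V" using subV e'E wp by auto
    define f where "f = {u, w}"
    have ef: "e \<noteq> f" "e' \<noteq> f" "e \<noteq> e'" using vu wp wu e'E(3) unfolding f_def e'eq by auto
    show ?thesis
    proof (cases "f \<in> E")
      case True
      define E' where "E' = E - {e, e', f}"
      have Eeq: "E = insert e (insert e' (insert f E'))" using True eE e'E(1) unfolding E'_def by auto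
      have nin: "e \<notin> E'" "e' \<notin> E'" "f \<notin> E'" unfolding E'_def by auto
      have fE': "finite E'" using fE unfolding E'_def by auto
      have "E' \<subset> E" unfolding E'_def using eE by auto
      then have lt: "card E' < card E" using psubset_card_mono[OF fE] by blast
      have sg': "simple_graph V E'" using less.prems(1) unfolding simple_graph_def E'_def by auto
      have degs: "degree E x = (if x \<in> {u, v, w} then 2 else 0) + degree E' x" for x
      proof -
        have "degree E x = (if x \<in> e then 1 else 0) + ((if x \<in> e' then 1 else 0) + ((if x \<in> f then 1 else 0) + degree E' x))"
          using dsum[OF fE] dsum[OF fE'] Eeq nin fE' ef by (simp add: sum.insert)
        then show ?thesis using vu wp wu unfolding e'eq f_def by auto
      qed
      have ev': "\<forall>x\<in>V. even (degree E' x)"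
      proof
        fix x assume "x \<in> V"
        then have "even (degree E x)" using less.prems(2) by auto
        then show "even (degree E' x)" using degs[of x] by (auto split: if_splits)
      qed
      obtain \<sigma>' where s': "\<sigma>' \<in> orientations E'" "\<forall>x\<in>V. 2 * indeg E' \<sigma>' x = degree E' x"
        using less.hyps[OF lt sg' ev'] by auto
      define \<sigma> where "\<sigma> = (\<lambda>g. if g = e then v else if g = e' then w else if g = f then u else \<sigma>' g)"
      have so: "\<sigma> \<in> orientations E"
        using s'(1) Eeq vu wp nin unfolding orientations_def \<sigma>_def f_def e'eq by (auto simp: PiE_iff extensional_def)
      have ind: "indeg E \<sigma> x = (if x \<in> {u, v, w} then 1 else 0) + indeg E' \<sigma>' x" for x
      proof -
        have "(\<Sum>g\<in>E'. if \<sigma> g = x then 1 else (0::nat)) = (\<Sum>g\<in>E'. if \<sigma>' g = x then 1 else 0)"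
          by (rule sum.cong) (use nin in \<open>auto simp: \<sigma>_def\<close>)
        then have "indeg E \<sigma> x = (if v = x then 1 else 0) + ((if w = x then 1 else 0) + ((if u = x then 1 else 0) + indeg E' \<sigma>' x))"
          using isum[OF fE] isum[OF fE'] Eeq nin fE' ef by (simp add: sum.insert \<sigma>_def)
        then show ?thesis using vu wp wu by auto
      qed
      show ?thesis
      proof (intro bexI[OF _ so] ballI)
        fix x assume "x \<in> V"
        then show "2 * indeg E \<sigma> x = degree E x" using ind[of x] degs[of x] s'(2) by auto
      qed
    next
      case False
      define E0 where "E0 = E - {e, e'}"
      define E' where "E' = insert f E0"
      have Eeq: "E = insert e (insert e' E0)" using eE e'E(1) unfolding E0_def by auto
      have nin: "e \<notin> E0" "e' \<notin> E0" "f \<notin> E0" using False unfolding E0_def by auto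
      have fE0: "finite E0" using fE unfolding E0_def by auto
      have fE': "finite E'" using fE0 unfolding E'_def by auto
      have lt: "card E' < card E" using fE0 nin ef unfolding E'_def Eeq by simp
      have sg': "simple_graph V E'" using less.prems(1) uV wV wu unfolding simple_graph_def E'_def E0_def f_def by auto
      have degs: "degree E x = (if x = v then 2 else 0) + degree E' x" for x
      proof -
        have "degree E x = (if x \<in> e then 1 else 0) + ((if x \<in> e' then 1 else 0) + degree E0 x)"
          using dsum[OF fE] dsum[OF fE0] Eeq nin fE0 ef by (simp add: sum.insert)
        moreover have "degree E' x = (if x \<in> f then 1 else 0) + degree E0 x"
          using dsum[OF fE'] dsum[OF fE0] nin fE0 unfolding E'_def by (simp add: sum.insert)
        ultimately show ?thesis using vu wp wu unfolding e'eq f_def by auto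
      qed
      have ev': "\<forall>x\<in>V. even (degree E' x)"
      proof
        fix x assume "x \<in> V"
        then have "even (degree E x)" using less.prems(2) by auto
        then show "even (degree E' x)" using degs[of x] by (auto split: if_splits)
      qed
      obtain \<sigma>' where s': "\<sigma>' \<in> orientations E'" "\<forall>x\<in>V. 2 * indeg E' \<sigma>' x = degree E' x"
        using less.hyps[OF lt sg' ev'] by auto
      have sf: "\<sigma>' f = u \<or> \<sigma>' f = w" using s'(1) unfolding orientations_def E'_def f_def by auto
      define \<sigma> where "\<sigma> = (\<lambda>g. if g = e then (if \<sigma>' f = w then v else u)
          else if g = e' then (if \<sigma>' f = w then w else v) else if g \<in> E0 then \<sigma>' g else undefined)"
      have so: "\<sigma> \<in> orientations E"
        using s'(1) Eeq vu wp nin unfolding orientations_def \<sigma>_def E'_def e'eq by (auto simp: PiE_iff extensional_def)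
      have ind: "indeg E \<sigma> x = (if x = v then 1 else 0) + indeg E' \<sigma>' x" for x
      proof -
        have "(\<Sum>g\<in>E0. if \<sigma> g = x then 1 else (0::nat)) = (\<Sum>g\<in>E0. if \<sigma>' g = x then 1 else 0)"
          by (rule sum.cong) (use nin in \<open>auto simp: \<sigma>_def\<close>)
        then have "indeg E \<sigma> x = (if \<sigma> e = x then 1 else 0) + ((if \<sigma> e' = x then 1 else 0) + (\<Sum>g\<in>E0. if \<sigma>' g = x then 1 else 0))"
          using isum[OF fE] Eeq nin fE0 ef by (simp add: sum.insert)
        moreover have "indeg E' \<sigma>' x = (if \<sigma>' f = x then 1 else 0) + (\<Sum>g\<in>E0. if \<sigma>' g = x then 1 else 0)"
          using isum[OF fE'] nin fE0 unfolding E'_def by (simp add: sum.insert)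
        ultimately show ?thesis using sf vu wp wu ef unfolding \<sigma>_def by auto
      qed
      show ?thesis
      proof (intro bexI[OF _ so] ballI)
        fix x assume "x \<in> V"
        then show "2 * indeg E \<sigma> x = degree E x" using ind[of x] degs[of x] s'(2) by auto
      qed
    qed
  qed
qed


lemma eqv_aux: "(2 * int a = int b) = (2 * a = (b::nat))" by presburger
lemma ev_aux: "2 * (a::nat) + h = d \<Longrightarrow> even d \<Longrightarrow> even h" by presburger
lemma evi_aux: "even (d::nat) \<Longrightarrow> int d = 2 * (int d div 2)" by presburger
lemma fin_aux: "p * p + e \<le> e * e + p \<Longrightarrow> (1::nat) \<le> e \<Longrightarrow> p \<le> e"
proof (rule ccontr)
  assume k: "p * p + e \<le> e * e + p" and e1: "1 \<le> e" and "\<not> p \<le> e"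
  then have pe: "p \<ge> e + 1" by simp
  have a: "p * p \<ge> (e + 1) * p" using pe by (rule mult_le_mono1)
  have b: "e * p \<ge> e * (e + 1)" using pe by (rule mult_le_mono2)
  have c: "(e + 1) * p = e * p + p" "e * (e + 1) = e * e + e" by (simp_all add: algebra_simps)
  show False using a b c k e1 by linarith
qed

lemma Om_E: "card (Om V E E) = 1"
proof -
  have "Om V E E = {\<lambda>_. undefined}"
    unfolding Om_def orientations_def indeg_def by auto
  then show ?thesis by simp
qed

lemma main_ineq:
  "simple_graph V E \<Longrightarrow> \<forall>v\<in>V. even (degree E v) \<Longrightarrow> card (Aset V E b) \<le> card (Aset V E (\<lambda>_. 0))"
proof (induction "card E" arbitrary: E b rule: less_induct)
  case less
  have sg: "simple_graph V E" using less.prems(1) .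
  have fE: "finite E" using simple_finite[OF sg] .
  define T where "T c H = card (Om V E H) * card (Aset V H c)" for c H
  have Sc: "card (Aset V E c) * card (Aset V E c) = T c E + (\<Sum>H\<in>Pow E - {E}. T c H)" for c
  proof -
    have "card (Aset V E c) * card (Aset V E c) = card (Aset V E c) * card (Aset V E (\<lambda>v. - c v))"
      using card_sym[OF sg, of c] by simp
    also have "\<dots> = (\<Sum>H\<in>Pow E. card (Pset V E c H))" using card_pairs[OF sg] .
    also have "\<dots> = (\<Sum>H\<in>Pow E. T c H)"
      by (rule sum.cong) (auto simp: T_def card_P[OF sg])
    also have "\<dots> = T c E + (\<Sum>H\<in>Pow E - {E}. T c H)"
      using fE by (simp add: sum.remove)
    finally show ?thesis .
  qed
  have OE: "card (Om V E E) = 1" by (rule Om_E)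
  have TE: "T c E = card (Aset V E c)" for c unfolding T_def using OE by simp
  have le: "T b H \<le> T (\<lambda>_. 0) H" if H: "H \<in> Pow E - {E}" for H
  proof (cases "Om V E H = {}")
    case True then show ?thesis unfolding T_def by simp
  next
    case False
    then obtain \<omega> where om: "\<omega> \<in> Om V E H" by auto
    have HE: "H \<subset> E" using H by auto
    have lt: "card H < card E" using psubset_card_mono[OF fE HE] .
    have sgH: "simple_graph V H" using sg HE unfolding simple_graph_def by auto
    have evH: "\<forall>v\<in>V. even (degree H v)"
    proof
      fix v assume v: "v \<in> V"
      then have "2 * indeg (E - H) \<omega> v + degree H v = degree E v" using om unfolding Om_def by auto
      moreover have "even (degree E v)" using less.prems(2) v by auto
      ultimately show "even (degree H v)" by (rule ev_aux)
    qed
    have "card (Aset V H b) \<le> card (Aset V H (\<lambda>_. 0))" using less.hyps[OF lt sgH evH] .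
    then show ?thesis unfolding T_def by simp
  qed
  have R: "(\<Sum>H\<in>Pow E - {E}. T b H) \<le> (\<Sum>H\<in>Pow E - {E}. T (\<lambda>_. 0) H)"
    by (rule sum_mono) (rule le)
  define p where "p = card (Aset V E b)"
  define e where "e = card (Aset V E (\<lambda>_. 0))"
  have key: "p * p + e \<le> e * e + p"
  proof -
    have "p * p = p + (\<Sum>H\<in>Pow E - {E}. T b H)" using Sc[of b] TE[of b] unfolding p_def by simp
    moreover have "e * e = e + (\<Sum>H\<in>Pow E - {E}. T (\<lambda>_. 0) H)" using Sc[of "\<lambda>_. 0"] TE[of "\<lambda>_. 0"] unfolding e_def by simp
    ultimately show ?thesis using R by linarith
  qed
  obtain \<sigma> where s: "\<sigma> \<in> orientations E" "\<forall>v\<in>V. 2 * indeg E \<sigma> v = degree E v"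
    using exists_euler[OF less.prems] by auto
  have "\<sigma> \<in> Aset V E (\<lambda>_. 0)" using s unfolding Aset_def by (simp add: eqv_aux)
  moreover have "finite (Aset V E (\<lambda>_. 0))" using finite_orient[OF sg] unfolding Aset_def by auto
  ultimately have "card (Aset V E (\<lambda>_. 0)) > 0" using card_gt_0_iff by blast
  then have e1: "e \<ge> 1" unfolding e_def by simp
  show ?case using fin_aux[OF key e1] unfolding p_def e_def .
qed

theorem theorem1p11:
  fixes V :: "'a set" and E :: "'a set set" and r :: "'a \<Rightarrow> int"
  assumes "simple_graph V E"
    and "\<forall>v\<in>V. even (degree E v)"
  shows "eps_r V E r \<le> eps V E"
proof -
  define b where "b v = r v - int (degree E v) div 2" for v
  have "{\<sigma> \<in> orientations E. \<forall>v\<in>V. int (indeg E \<sigma> v) = r v} = Aset V E b"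
  proof -
    have "\<forall>v\<in>V. int (degree E v) = 2 * (int (degree E v) div 2)"
      using assms(2) evi_aux by blast
    then have "\<forall>v\<in>V. (int (indeg E \<sigma> v) = r v) = (2 * int (indeg E \<sigma> v) = int (degree E v) + 2 * b v)" for \<sigma>
      unfolding b_def by auto
    then show ?thesis unfolding Aset_def by auto
  qed
  moreover have "{\<sigma> \<in> orientations E. \<forall>v\<in>V. 2 * indeg E \<sigma> v = degree E v} = Aset V E (\<lambda>_. 0)"
    unfolding Aset_def by (simp add: eqv_aux)
  ultimately show ?thesis unfolding eps_r_def eps_def using main_ineq[OF assms] by simp
qed

end
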